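(* Let $P\in\mathcal{N}_2$ via the pair of chain covers $\{\mathcal{C}_1,\mathcal{C}_2\}$. Let $Q\subseteq P$ be a diamond consisting of saturated chains $\bm{a}$ and $\bm{b}$ with common minimum $x$ and common maximum $y$, and suppose that $Q\cup\bm{C}\cup\bm{D}$ is a diamond with bottom chain $\bm{C}$ of length $k$ and top chain $\bm{D}$ of length $l$ in $P$. Suppose $Q$ has Type I with respect to $\{\mathcal{C}_1,\mathcal{C}_2\}$. Then, after possibly interchanging the roles of $\mathcal{C}_1$ and $\mathcal{C}_2$, there is a chain of $\mathcal{C}_1$ containing $(\bm{C}\cup\bm{a})\setminus\{y\}$, a chain of $\mathcal{C}_2$ containing $(\bm{C}\cup\bm{b})\setminus\{y\}$, a chain of $\mathcal{C}_2$ containing $(\bm{a}\cup\bm{D})\setminus\{x\}$, and a chain of $\mathcal{C}_1$ containing $(\bm{b}\cup\bm{D})\setminus\{x\}$. Moreover, $$\max\{|\bm{C}|,|\bm{D}|\} < \min\{|\bm{a}|-2,\ |\bm{b}|-2\}.$$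
   Context: All posets are finite; $|\cdot|$ denotes number of elements. An edge of a poset is a covering relation $x \lessdot y$. A chain cover of a poset $P$ is a set of pairwise disjoint saturated chains whose union is $P$. A labeling of $P$ is a map $\lambda:P\to\mathbb{R}$. For a chain cover $\mathcal{C}$, $\mathcal{C}$-sorting a labeling means: for each chain $\bm{c}\in\mathcal{C}$, permute the labels $\{\lambda(v): v\in \bm{c}\}$ among the elements of $\bm{c}$ so that they are non-decreasing from the minimum of $\bm{c}$ to its maximum. A finite poset $P$ is in $\mathcal{N}_2$ via $\{\mathcal{C}_1,\mathcal{C}_2\}$ if $\{\mathcal{C}_1,\mathcal{C}_2\}$ is an unordered pair of chain covers of $P$ such that (1) for every labeling of $P$ and for $i=1$ and $i=2$, first $\mathcal{C}_i$-sorting and then $\mathcal{C}_{3-i}$-sorting leaves the labels non-decreasing along every chain of $\mathcal{C}_i$; and (2) every edge of $P$ is contained in some chain of $\mathcal{C}_1$ or of $\mathcal{C}_2$. A diamond in a poset is a convex subposet (i.e. $u\le w\le v$ with $u,v$ in it implies $w$ in it) that is the union of two distinct saturated chains which intersect only in a common minimal element and a common maximal element. A diamond with bottom chain of length $k$ and top chain of length $l$ is a convex subposet consisting of a diamond with minimum $x$ and maximum $y$, a chain $\bm{C}=\{w_k\lessdot\cdots\lessdot w_1\}$ of $k$ elements with $w_1\lessdot x$, and a chain $\bm{D}=\{z_1\lessdot\cdots\lessdot z_l\}$ of $l$ elements with $y\lessdot z_1$, with no other elements or relations among these elements than those generated by the stated ones. A diamond with chains $\bm{a},\bm{b}$ (minimum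 $x$, maximum $y$) has Type I with respect to $\{\mathcal{C}_1,\mathcal{C}_2\}$ if, after possibly interchanging $\mathcal{C}_1$ and $\mathcal{C}_2$, there is a chain of $\mathcal{C}_1$ containing $\bm{a}\setminus\{y\}$, a chain of $\mathcal{C}_2$ containing $\bm{b}\setminus\{y\}$, a chain of $\mathcal{C}_1$ containing $\bm{b}\setminus\{x\}$, and a chain of $\mathcal{C}_2$ containing $\bm{a}\setminus\{x\}$. *)

theory Defs
  imports Complex_Main
begin

text \<open>A finite poset is represented as a finite carrier set P inside a type of
class order, with the induced order.\<close>

definition covers :: "'a::order set \<Rightarrow> 'a \<Rightarrow> 'a \<Rightarrow> bool" where
  "covers P u v \<longleftrightarrow> u \<in> P \<and> v \<in> P \<and> u < v \<and> \<not> (\<exists>w\<in>P. u < w \<and> w < v)"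

definition sat_chain :: "'a::order set \<Rightarrow> 'a set \<Rightarrow> bool" where
  "sat_chain P c \<longleftrightarrow> c \<noteq> {} \<and> c \<subseteq> P \<and>
     (\<forall>u\<in>c. \<forall>v\<in>c. u \<le> v \<or> v \<le> u) \<and>
     (\<forall>u\<in>c. \<forall>v\<in>c. u < v \<and> \<not> (\<exists>w\<in>c. u < w \<and> w < v) \<longrightarrow> covers P u v)"

definition chain_cover :: "'a::order set \<Rightarrow> 'a set set \<Rightarrow> bool" where
  "chain_cover P C \<longleftrightarrow> (\<forall>c\<in>C. sat_chain P c) \<and> \<Union>C = P \<and>
     (\<forall>c\<in>C. \<forall>d\<in>C. c \<noteq> d \<longrightarrow> c \<inter> d = {})"

definition csort :: "'a::order set set \<Rightarrow> ('a \<Rightarrow> real) \<Rightarrow> ('a \<Rightarrow> real) \<Rightarrow> bool" where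
  "csort C lam mu \<longleftrightarrow> (\<forall>c\<in>C.
     (\<exists>\<sigma>. bij_betw \<sigma> c c \<and> (\<forall>v\<in>c. mu v = lam (\<sigma> v))) \<and>
     (\<forall>u\<in>c. \<forall>v\<in>c. u \<le> v \<longrightarrow> mu u \<le> mu v))"

definition nondecr_along :: "'a::order set set \<Rightarrow> ('a \<Rightarrow> real) \<Rightarrow> bool" where
  "nondecr_along C mu \<longleftrightarrow> (\<forall>c\<in>C. \<forall>u\<in>c. \<forall>v\<in>c. u \<le> v \<longrightarrow> mu u \<le> mu v)"

definition sort_compat :: "'a::order set set \<Rightarrow> 'a set set \<Rightarrow> bool" where
  "sort_compat C1 C2 \<longleftrightarrow>
     (\<forall>lam mu nu. csort C1 lam mu \<longrightarrow> csort C2 mu nu \<longrightarrow> nondecr_along C1 nu)"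

definition in_N2 :: "'a::order set \<Rightarrow> 'a set set \<Rightarrow> 'a set set \<Rightarrow> bool" where
  "in_N2 P C1 C2 \<longleftrightarrow> finite P \<and> chain_cover P C1 \<and> chain_cover P C2 \<and>
     sort_compat C1 C2 \<and> sort_compat C2 C1 \<and>
     (\<forall>u v. covers P u v \<longrightarrow> (\<exists>c\<in>C1 \<union> C2. u \<in> c \<and> v \<in> c))"

definition convex_in :: "'a::order set \<Rightarrow> 'a set \<Rightarrow> bool" where
  "convex_in P Q \<longleftrightarrow> Q \<subseteq> P \<and> (\<forall>u\<in>Q. \<forall>v\<in>Q. \<forall>w\<in>P. u \<le> w \<and> w \<le> v \<longrightarrow> w \<in> Q)"

definition diamond :: "'a::order set \<Rightarrow> 'a set \<Rightarrow> 'a set \<Rightarrow> 'a set \<Rightarrow> 'a \<Rightarrow> 'a \<Rightarrow> bool" where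
  "diamond P Q a b x y \<longleftrightarrow> convex_in P Q \<and> Q = a \<union> b \<and>
     sat_chain P a \<and> sat_chain P b \<and> a \<noteq> b \<and> a \<inter> b = {x, y} \<and>
     x \<in> a \<and> x \<in> b \<and> y \<in> a \<and> y \<in> b \<and>
     (\<forall>u\<in>a \<union> b. x \<le> u \<and> u \<le> y)"

text \<open>Q \<union> {w 1..w k} \<union> {z 1..z l} is a diamond with bottom chain
w k \<lessdot> ... \<lessdot> w 1 \<lessdot> x of length k and top chain y \<lessdot> z 1 \<lessdot> ... \<lessdot> z l of length l:
a convex subposet with no other elements, and whose order is exactly the one
generated by the order of the diamond and the stated covering relations.\<close>
definition diamond_ext ::
  "'a::order set \<Rightarrow> 'a set \<Rightarrow> 'a set \<Rightarrow> 'a set \<Rightarrow> 'a \<Rightarrow> 'a \<Rightarrow> nat \<Rightarrow> (nat \<Rightarrow> 'a) \<Rightarrow> nat \<Rightarrow> (nat \<Rightarrow> 'a) \<Rightarrow> bool" where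
  "diamond_ext P Q a b x y k w l z \<longleftrightarrow>
     diamond P Q a b x y \<and> 1 \<le> k \<and> 1 \<le> l \<and>
     inj_on w {1..k} \<and> inj_on z {1..l} \<and>
     w ` {1..k} \<inter> Q = {} \<and> z ` {1..l} \<inter> Q = {} \<and> w ` {1..k} \<inter> z ` {1..l} = {} \<and>
     convex_in P (Q \<union> w ` {1..k} \<union> z ` {1..l}) \<and>
     (\<forall>i. 1 \<le> i \<and> i < k \<longrightarrow> covers P (w (Suc i)) (w i)) \<and> covers P (w 1) x \<and>
     (\<forall>i. 1 \<le> i \<and> i < l \<longrightarrow> covers P (z i) (z (Suc i))) \<and> covers P y (z 1) \<and>
     (let R = Q \<union> w ` {1..k} \<union> z ` {1..l};
          G = {(u, v). u \<in> Q \<and> v \<in> Q \<and> u \<le> v}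
              \<union> {(w (Suc i), w i) | i. 1 \<le> i \<and> i < k} \<union> {(w 1, x), (y, z 1)}
              \<union> {(z i, z (Suc i)) | i. 1 \<le> i \<and> i < l}
      in \<forall>u\<in>R. \<forall>v\<in>R. u \<le> v \<longleftrightarrow> (u, v) \<in> G\<^sup>*)"

definition typeI_ord :: "'a set set \<Rightarrow> 'a set set \<Rightarrow> 'a set \<Rightarrow> 'a set \<Rightarrow> 'a \<Rightarrow> 'a \<Rightarrow> bool" where
  "typeI_ord C1 C2 a b x y \<longleftrightarrow>
     (\<exists>c\<in>C1. a - {y} \<subseteq> c) \<and> (\<exists>c\<in>C2. b - {y} \<subseteq> c) \<and>
     (\<exists>c\<in>C1. b - {x} \<subseteq> c) \<and> (\<exists>c\<in>C2. a - {x} \<subseteq> c)"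

definition typeI :: "'a set set \<Rightarrow> 'a set set \<Rightarrow> 'a set \<Rightarrow> 'a set \<Rightarrow> 'a \<Rightarrow> 'a \<Rightarrow> bool" where
  "typeI C1 C2 a b x y \<longleftrightarrow> typeI_ord C1 C2 a b x y \<or> typeI_ord C2 C1 a b x y"

end

theory Submission
  imports Defs
begin

lemma total_max:
  fixes A :: "'a::order set"
  assumes "finite A" "A \<noteq> {}" "\<forall>u\<in>A. \<forall>v\<in>A. u \<le> v \<or> v \<le> u"
  shows "\<exists>m\<in>A. \<forall>u\<in>A. u \<le> m"
proof -
  obtain m where "m \<in> A" "\<forall>u\<in>A. m \<le> u \<longrightarrow> m = u"
    using finite_has_maximal[OF assms(1,2)] by blast
  then show ?thesis using assms(3) by metis
qed

lemma total_min:
  fixes A :: "'a::order set"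
  assumes "finite A" "A \<noteq> {}" "\<forall>u\<in>A. \<forall>v\<in>A. u \<le> v \<or> v \<le> u"
  shows "\<exists>m\<in>A. \<forall>u\<in>A. m \<le> u"
proof -
  obtain m where "m \<in> A" "\<forall>u\<in>A. u \<le> m \<longrightarrow> m = u"
    using finite_has_minimal[OF assms(1,2)] by blast
  then show ?thesis using assms(3) by metis
qed

lemma rank_card:
  fixes d :: "'a::order set"
  assumes fin: "finite d" and tot: "\<forall>u\<in>d. \<forall>v\<in>d. u \<le> v \<or> v \<le> u" and n: "n \<le> card d"
  shows "card {v\<in>d. card {h\<in>d. v \<le> h} \<le> n} = n"
proof -
  let ?r = "\<lambda>v. card {h\<in>d. v \<le> h}"
  have lt: "?r v < ?r u" if "u < v" "u\<in>d" "v\<in>d" for u v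
  proof -
    have "u \<in> {h\<in>d. u \<le> h}" "u \<notin> {h\<in>d. v \<le> h}" using that by auto
    moreover have "{h\<in>d. v \<le> h} \<subseteq> {h\<in>d. u \<le> h}" using that by (auto intro: order_trans)
    ultimately have "{h\<in>d. v \<le> h} \<subset> {h\<in>d. u \<le> h}" by blast
    then show ?thesis using fin by (intro psubset_card_mono) auto
  qed
  have inj: "inj_on ?r d"
  proof (rule inj_onI)
    fix u v assume u: "u \<in> d" and v: "v \<in> d" and eq: "?r u = ?r v"
    show "u = v"
    proof (rule ccontr)
      assume ne: "u \<noteq> v"
      from tot u v ne have "u < v \<or> v < u" by (auto simp: less_le)
      then show False using lt u v eq by force
    qed
  qed
  have sub: "?r ` d \<subseteq> {1..card d}"
  proof
    fix m assume "m \<in> ?r ` d"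
    then obtain v where v: "v \<in> d" "m = ?r v" by blast
    have "v \<in> {h\<in>d. v \<le> h}" using v by auto
    then have "?r v \<ge> 1" using fin by (metis (no_types, lifting) One_nat_def Suc_leI card_gt_0_iff empty_iff finite_subset mem_Collect_eq subsetI)
    moreover have "?r v \<le> card d" using fin by (intro card_mono) auto
    ultimately show "m \<in> {1..card d}" using v by auto
  qed
  have img: "?r ` d = {1..card d}"
    using card_subset_eq[OF _ sub] card_image[OF inj] by simp
  have bij: "bij_betw ?r d {1..card d}" by (simp add: bij_betw_def inj img)
  have "bij_betw ?r {v\<in>d. ?r v \<le> n} {1..n}"
  proof (rule bij_betw_subset[OF bij])
    show "{v\<in>d. ?r v \<le> n} \<subseteq> d" by auto
    show "?r ` {v\<in>d. ?r v \<le> n} = {1..n}"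
    proof
      show "?r ` {v\<in>d. ?r v \<le> n} \<subseteq> {1..n}" using img by force
      show "{1..n} \<subseteq> ?r ` {v\<in>d. ?r v \<le> n}"
      proof
        fix m assume m: "m \<in> {1..n}"
        then have "m \<in> ?r ` d" using img n by auto
        then obtain v where "v \<in> d" "m = ?r v" by blast
        then show "m \<in> ?r ` {v\<in>d. ?r v \<le> n}" using m by auto
      qed
    qed
  qed
  then show ?thesis by (simp add: bij_betw_same_card)
qed

lemma cc_unique:
  assumes "chain_cover P C" "c \<in> C" "d \<in> C" "v \<in> c" "v \<in> d"
  shows "c = d"
  using assms unfolding chain_cover_def by blast

lemma cc_sub:
  assumes "chain_cover P C" "c \<in> C"
  shows "c \<subseteq> P"
  using assms unfolding chain_cover_def sat_chain_def by blast

lemma cc_tot: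
  assumes "chain_cover P C" "c \<in> C"
  shows "\<forall>u\<in>c. \<forall>v\<in>c. u \<le> v \<or> v \<le> u"
  using assms unfolding chain_cover_def sat_chain_def by blast

lemma cc_ex:
  assumes "chain_cover P C" "v \<in> P"
  shows "\<exists>c\<in>C. v \<in> c"
  using assms unfolding chain_cover_def by blast

lemma sort_up:
  fixes P :: "'a::order set"
  assumes fin: "finite P" and cc1: "chain_cover P C1" and cc2: "chain_cover P C2"
    and sc: "sort_compat C1 C2"
    and up: "\<forall>c\<in>C1. \<forall>u\<in>c. \<forall>v\<in>c. u \<le> v \<longrightarrow> u \<in> S \<longrightarrow> v \<in> S"
    and c: "c \<in> C1" "u \<in> c" "v \<in> c" "u \<le> v"
    and d: "d \<in> C2" "u \<in> d" "card {h\<in>d. u \<le> h} \<le> card (S \<inter> d)"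
    and d': "d' \<in> C2" "v \<in> d'" "card (S \<inter> d') < card {h\<in>d'. v \<le> h}"
  shows False
proof -
  define lam where "lam = (\<lambda>v. if v \<in> S then 1 else 0 :: real)"
  define T where "T = {v. \<exists>d\<in>C2. v \<in> d \<and> card {h\<in>d. v \<le> h} \<le> card (S \<inter> d)}"
  define nu where "nu = (\<lambda>v. if v \<in> T then 1 else 0 :: real)"
  have cs1: "csort C1 lam lam"
    unfolding csort_def
  proof (rule ballI, rule conjI)
    fix e assume "e \<in> C1"
    show "\<exists>\<sigma>. bij_betw \<sigma> e e \<and> (\<forall>v\<in>e. lam v = lam (\<sigma> v))"
      by (rule exI[of _ id]) auto
    show "\<forall>u\<in>e. \<forall>v\<in>e. u \<le> v \<longrightarrow> lam u \<le> lam v"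
    proof (intro ballI impI)
      fix u v assume "u \<in> e" "v \<in> e" "u \<le> v"
      then have "u \<in> S \<longrightarrow> v \<in> S" using up \<open>e \<in> C1\<close> by blast
      then show "lam u \<le> lam v" unfolding lam_def by auto
    qed
  qed
  have Te: "v \<in> T \<longleftrightarrow> card {h\<in>e. v \<le> h} \<le> card (S \<inter> e)" if "e \<in> C2" "v \<in> e" for e v
    using that cc_unique[OF cc2] unfolding T_def by blast
  have cs2: "csort C2 lam nu"
    unfolding csort_def
  proof (rule ballI, rule conjI)
    fix e assume e: "e \<in> C2"
    have fe: "finite e" using cc_sub[OF cc2 e] fin finite_subset by blast
    have tot: "\<forall>u\<in>e. \<forall>v\<in>e. u \<le> v \<or> v \<le> u" using cc_tot[OF cc2 e] .
    have TE: "T \<inter> e = {v\<in>e. card {h\<in>e. v \<le> h} \<le> card (S \<inter> e)}"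
      using Te[OF e] by blast
    have cT: "card (T \<inter> e) = card (S \<inter> e)"
      unfolding TE by (rule rank_card[OF fe tot]) (simp add: card_mono fe)
    obtain f where f: "bij_betw f (T \<inter> e) (S \<inter> e)"
      using finite_same_card_bij[OF _ _ cT] fe by blast
    have cT2: "card (e - T) = card (e - S)"
    proof -
      have "card (e - T) = card e - card (T \<inter> e)"
        by (metis Int_commute card_Diff_subset_Int fe finite_Int)
      moreover have "card (e - S) = card e - card (S \<inter> e)"
        by (metis Int_commute card_Diff_subset_Int fe finite_Int)
      ultimately show ?thesis using cT by simp
    qed
    obtain g where g: "bij_betw g (e - T) (e - S)"
      using finite_same_card_bij[OF _ _ cT2] fe by blast
    define \<sigma> where "\<sigma> = (\<lambda>v. if v \<in> T then f v else g v)"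
    have b1: "bij_betw \<sigma> (T \<inter> e) (S \<inter> e)"
      by (rule bij_betw_cong[THEN iffD2, OF _ f]) (simp add: \<sigma>_def)
    have b2: "bij_betw \<sigma> (e - T) (e - S)"
      by (rule bij_betw_cong[THEN iffD2, OF _ g]) (simp add: \<sigma>_def)
    have "bij_betw \<sigma> ((T \<inter> e) \<union> (e - T)) ((S \<inter> e) \<union> (e - S))"
      by (rule bij_betw_combine[OF b1 b2]) auto
    moreover have "(T \<inter> e) \<union> (e - T) = e" "(S \<inter> e) \<union> (e - S) = e" by auto
    ultimately have bs: "bij_betw \<sigma> e e" by simp
    have "\<forall>v\<in>e. nu v = lam (\<sigma> v)"
    proof
      fix v assume v: "v \<in> e"
      show "nu v = lam (\<sigma> v)"
      proof (cases "v \<in> T")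
        case True
        then have "\<sigma> v \<in> S" using f v unfolding \<sigma>_def bij_betw_def by auto
        then show ?thesis using True unfolding nu_def lam_def by simp
      next
        case False
        then have "\<sigma> v \<notin> S" using g v unfolding \<sigma>_def bij_betw_def by auto
        then show ?thesis using False unfolding nu_def lam_def by simp
      qed
    qed
    then show "\<exists>\<sigma>. bij_betw \<sigma> e e \<and> (\<forall>v\<in>e. nu v = lam (\<sigma> v))" using bs by blast
    show "\<forall>u\<in>e. \<forall>v\<in>e. u \<le> v \<longrightarrow> nu u \<le> nu v"
    proof (intro ballI impI)
      fix u v assume uv: "u \<in> e" "v \<in> e" "u \<le> v"
      have "card {h\<in>e. v \<le> h} \<le> card {h\<in>e. u \<le> h}"
        using fe uv by (intro card_mono) (auto intro: order_trans)
      then show "nu u \<le> nu v" using Te[OF e uv(1)] Te[OF e uv(2)] unfolding nu_def by auto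
    qed
  qed
  have "nondecr_along C1 nu" using sc cs1 cs2 unfolding sort_compat_def by blast
  then have "nu u \<le> nu v" using c unfolding nondecr_along_def by blast
  moreover have "u \<in> T" using Te[OF d(1,2)] d(3) by blast
  moreover have "v \<notin> T" using Te[OF d'(1,2)] d'(3) by auto
  ultimately show False unfolding nu_def by simp
qed

lemma card_split:
  fixes d :: "'a::order set"
  assumes fin: "finite d" and tot: "\<forall>u\<in>d. \<forall>v\<in>d. u \<le> v \<or> v \<le> u" and v: "v \<in> d"
  shows "card {h\<in>d. h \<le> v} + card {h\<in>d. v \<le> h} = card d + 1"
proof -
  have "card {h\<in>d. h \<le> v} + card {h\<in>d. v \<le> h} =
        card ({h\<in>d. h \<le> v} \<union> {h\<in>d. v \<le> h}) + card ({h\<in>d. h \<le> v} \<inter> {h\<in>d. v \<le> h})"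
    using fin by (intro card_Un_Int) auto
  moreover have "{h\<in>d. h \<le> v} \<union> {h\<in>d. v \<le> h} = d" using tot v by blast
  moreover have "{h\<in>d. h \<le> v} \<inter> {h\<in>d. v \<le> h} = {v}" using v by (auto intro: order_antisym)
  ultimately show ?thesis by simp
qed

lemma sort_down:
  fixes P :: "'a::order set"
  assumes fin: "finite P" and cc1: "chain_cover P C1" and cc2: "chain_cover P C2"
    and sc: "sort_compat C1 C2"
    and dn: "\<forall>c\<in>C1. \<forall>u\<in>c. \<forall>v\<in>c. u \<le> v \<longrightarrow> v \<in> Z \<longrightarrow> u \<in> Z"
    and c: "c \<in> C1" "u \<in> c" "v \<in> c" "u \<le> v"
    and d: "d \<in> C2" "v \<in> d" "card {h\<in>d. h \<le> v} \<le> card (Z \<inter> d)"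
    and d': "d' \<in> C2" "u \<in> d'" "card (Z \<inter> d') < card {h\<in>d'. h \<le> u}"
  shows False
proof (rule sort_up[OF fin cc1 cc2 sc _ c, of "P - Z" d' d])
  show "\<forall>c\<in>C1. \<forall>u\<in>c. \<forall>v\<in>c. u \<le> v \<longrightarrow> u \<in> P - Z \<longrightarrow> v \<in> P - Z"
    using dn cc_sub[OF cc1] by blast
  show "d' \<in> C2" "u \<in> d'" "d \<in> C2" "v \<in> d" using d d' by auto
  have fd: "finite d" using cc_sub[OF cc2 d(1)] fin finite_subset by blast
  have fd': "finite d'" using cc_sub[OF cc2 d'(1)] fin finite_subset by blast
  have e1: "card ((P - Z) \<inter> d) = card d - card (Z \<inter> d)"
  proof -
    have "(P - Z) \<inter> d = d - Z" using cc_sub[OF cc2 d(1)] by blast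
    then show ?thesis by (metis Int_commute card_Diff_subset_Int fd finite_Int)
  qed
  have e2: "card ((P - Z) \<inter> d') = card d' - card (Z \<inter> d')"
  proof -
    have "(P - Z) \<inter> d' = d' - Z" using cc_sub[OF cc2 d'(1)] by blast
    then show ?thesis by (metis Int_commute card_Diff_subset_Int fd' finite_Int)
  qed
  have s1: "card {h\<in>d. h \<le> v} + card {h\<in>d. v \<le> h} = card d + 1"
    by (rule card_split[OF fd cc_tot[OF cc2 d(1)] d(2)])
  have s2: "card {h\<in>d'. h \<le> u} + card {h\<in>d'. u \<le> h} = card d' + 1"
    by (rule card_split[OF fd' cc_tot[OF cc2 d'(1)] d'(2)])
  have z1: "card (Z \<inter> d) \<le> card d" using fd by (intro card_mono) auto
  have z2: "card (Z \<inter> d') \<le> card d'" using fd' by (intro card_mono) auto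
  show "card {h\<in>d'. u \<le> h} \<le> card ((P - Z) \<inter> d')"
    using e2 s2 d'(3) z2 by linarith
  show "card ((P - Z) \<inter> d) < card {h\<in>d. v \<le> h}"
    using e1 s1 d(3) z1 by linarith
qed

lemma up_step:
  fixes P :: "'a::order set"
  assumes fin: "finite P" and cc1: "chain_cover P C1" and cc2: "chain_cover P C2"
    and sc: "sort_compat C1 C2"
    and c: "c \<in> C1" "g \<in> c" and d: "d \<in> C2" "g \<in> d" "u \<in> d"
    and c': "c' \<in> C1" "u \<in> c'" "v \<in> c'"
    and gu: "g < u" and cov: "covers P u v" and vd: "v \<notin> d"
    and hyp: "\<forall>h\<in>c. g < h \<longrightarrow> h \<le> v \<longrightarrow> False"
  shows False
proof -
  define S where "S = {h. h \<in> c \<and> g \<le> h} \<union> {h. \<exists>e\<in>d. u < e \<and> e \<le> h}"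
  have up: "\<forall>c0\<in>C1. \<forall>u0\<in>c0. \<forall>v0\<in>c0. u0 \<le> v0 \<longrightarrow> u0 \<in> S \<longrightarrow> v0 \<in> S"
  proof (intro ballI impI)
    fix c0 u0 v0 assume h: "c0 \<in> C1" "u0 \<in> c0" "v0 \<in> c0" "u0 \<le> v0" "u0 \<in> S"
    show "v0 \<in> S"
    proof (cases "u0 \<in> c \<and> g \<le> u0")
      case True
      then have "c0 = c" using cc_unique[OF cc1 h(1) c(1) h(2)] by blast
      then show ?thesis using True h unfolding S_def by (auto intro: order_trans)
    next
      case False
      then show ?thesis using h unfolding S_def by (auto intro: order_trans)
    qed
  qed
  have uv: "u < v" "u \<in> P" "v \<in> P" and nb: "\<not> (\<exists>w\<in>P. u < w \<and> w < v)"
    using cov unfolding covers_def by auto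
  obtain d' where d': "d' \<in> C2" "v \<in> d'" using cc_ex[OF cc2 uv(3)] by blast
  have fd: "finite d" using cc_sub[OF cc2 d(1)] fin finite_subset by blast
  have fd': "finite d'" using cc_sub[OF cc2 d'(1)] fin finite_subset by blast
  have k1: "card {h\<in>d. u \<le> h} \<le> card (S \<inter> d)"
  proof -
    have "{h\<in>d. u \<le> h} = insert u {h\<in>d. u < h}" using d(3) by (auto simp: less_le)
    then have "card {h\<in>d. u \<le> h} = Suc (card {h\<in>d. u < h})" using fd by simp
    also have "\<dots> = card (insert g {h\<in>d. u < h})"
    proof -
      have "g \<notin> {h\<in>d. u < h}" using gu by auto
      then show ?thesis using fd by simp
    qed
    also have "\<dots> \<le> card (S \<inter> d)"
      using fd c d unfolding S_def by (intro card_mono) auto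
    finally show ?thesis .
  qed
  have k2: "card (S \<inter> d') < card {h\<in>d'. v \<le> h}"
  proof -
    have "S \<inter> d' \<subseteq> {h\<in>d'. v < h}"
    proof
      fix h assume h: "h \<in> S \<inter> d'"
      have "\<not> h \<le> v"
      proof
        assume hv: "h \<le> v"
        show False
        proof (cases "h \<in> c \<and> g \<le> h")
          case True
          show False
          proof (cases "h = g")
            case True
            then have "d = d'" using cc_unique[OF cc2 d(1) d'(1) d(2)] h by blast
            then show False using vd d' by blast
          next
            case False
            then show False using hyp True hv by (auto simp: less_le)
          qed
        next
          case False
          then obtain e where e: "e \<in> d" "u < e" "e \<le> h" using h unfolding S_def by blast
          have "e \<in> P" using e cc_sub[OF cc2 d(1)] by blast
          moreover have "e \<le> v" using e hv by auto
          moreover have "e \<noteq> v" using e vd by blast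
          ultimately show False using nb e by (auto simp: less_le)
        qed
      qed
      then show "h \<in> {h\<in>d'. v < h}" using h cc_tot[OF cc2 d'(1)] d' by (auto simp: less_le)
    qed
    then have "card (S \<inter> d') \<le> card {h\<in>d'. v < h}" using fd' by (intro card_mono) auto
    also have "\<dots> < card {h\<in>d'. v \<le> h}"
      using fd' d' by (intro psubset_card_mono) auto
    finally show ?thesis .
  qed
  show False
    by (rule sort_up[OF fin cc1 cc2 sc up c' less_imp_le[OF uv(1)] d(1,3) k1 d' k2])
qed

lemma down_step:
  fixes P :: "'a::order set"
  assumes fin: "finite P" and cc1: "chain_cover P C1" and cc2: "chain_cover P C2"
    and sc: "sort_compat C1 C2"
    and c: "c \<in> C1" "g \<in> c" and d: "d \<in> C2" "g \<in> d" "u \<in> d"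
    and c': "c' \<in> C1" "u \<in> c'" "v \<in> c'"
    and ug: "u < g" and cov: "covers P v u" and vd: "v \<notin> d"
    and hyp: "\<forall>h\<in>c. v \<le> h \<longrightarrow> h < g \<longrightarrow> False"
  shows False
proof -
  define Z where "Z = {h. h \<in> c \<and> h \<le> g} \<union> {h. \<exists>e\<in>d. e < u \<and> h \<le> e}"
  have dn: "\<forall>c0\<in>C1. \<forall>u0\<in>c0. \<forall>v0\<in>c0. u0 \<le> v0 \<longrightarrow> v0 \<in> Z \<longrightarrow> u0 \<in> Z"
  proof (intro ballI impI)
    fix c0 u0 v0 assume h: "c0 \<in> C1" "u0 \<in> c0" "v0 \<in> c0" "u0 \<le> v0" "v0 \<in> Z"
    show "u0 \<in> Z"
    proof (cases "v0 \<in> c \<and> v0 \<le> g")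
      case True
      then have "c0 = c" using cc_unique[OF cc1 h(1) c(1) h(3)] by blast
      then show ?thesis using True h unfolding Z_def by (auto intro: order_trans)
    next
      case False
      then show ?thesis using h unfolding Z_def by (auto intro: order_trans)
    qed
  qed
  have uv: "v < u" "v \<in> P" "u \<in> P" and nb: "\<not> (\<exists>w\<in>P. v < w \<and> w < u)"
    using cov unfolding covers_def by auto
  obtain d' where d': "d' \<in> C2" "v \<in> d'" using cc_ex[OF cc2 uv(2)] by blast
  have fd: "finite d" using cc_sub[OF cc2 d(1)] fin finite_subset by blast
  have fd': "finite d'" using cc_sub[OF cc2 d'(1)] fin finite_subset by blast
  have k1: "card {h\<in>d. h \<le> u} \<le> card (Z \<inter> d)"
  proof -
    have "{h\<in>d. h \<le> u} = insert u {h\<in>d. h < u}" using d(3) by (auto simp: less_le)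
    then have "card {h\<in>d. h \<le> u} = Suc (card {h\<in>d. h < u})" using fd by simp
    also have "\<dots> = card (insert g {h\<in>d. h < u})"
    proof -
      have "g \<notin> {h\<in>d. h < u}" using ug by auto
      then show ?thesis using fd by simp
    qed
    also have "\<dots> \<le> card (Z \<inter> d)"
      using fd c d unfolding Z_def by (intro card_mono) auto
    finally show ?thesis .
  qed
  have k2: "card (Z \<inter> d') < card {h\<in>d'. h \<le> v}"
  proof -
    have "Z \<inter> d' \<subseteq> {h\<in>d'. h < v}"
    proof
      fix h assume h: "h \<in> Z \<inter> d'"
      have "\<not> v \<le> h"
      proof
        assume hv: "v \<le> h"
        show False
        proof (cases "h \<in> c \<and> h \<le> g")
          case True
          show False
          proof (cases "h = g")
            case True
            then have "d = d'" using cc_unique[OF cc2 d(1) d'(1) d(2)] h by blast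
            then show False using vd d' by blast
          next
            case False
            then show False using hyp True hv by (auto simp: less_le)
          qed
        next
          case False
          then obtain e where e: "e \<in> d" "e < u" "h \<le> e" using h unfolding Z_def by blast
          have "e \<in> P" using e cc_sub[OF cc2 d(1)] by blast
          moreover have "v \<le> e" using e hv by (auto intro: order_trans)
          moreover have "e \<noteq> v" using e vd by blast
          ultimately show False using nb e by (auto simp: less_le)
        qed
      qed
      then show "h \<in> {h\<in>d'. h < v}" using h cc_tot[OF cc2 d'(1)] d' by (auto simp: less_le)
    qed
    then have "card (Z \<inter> d') \<le> card {h\<in>d'. h < v}" using fd' by (intro card_mono) auto
    also have "\<dots> < card {h\<in>d'. h \<le> v}"
      using fd' d' by (intro psubset_card_mono) auto
    finally show ?thesis .
  qed
  show False
    by (rule sort_down[OF fin cc1 cc2 sc dn c'(1,3,2) less_imp_le[OF uv(1)] d(1,3) k1 d' k2])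
qed

lemma in_N2_sym: "in_N2 P C1 C2 \<Longrightarrow> in_N2 P C2 C1"
  unfolding in_N2_def by (auto simp: Un_commute)

lemma diamond_sym: "diamond P Q a b x y \<Longrightarrow> diamond P Q b a x y"
  unfolding diamond_def by auto

lemma dext_sym: "diamond_ext P Q a b x y k w l z \<Longrightarrow> diamond_ext P Q b a x y k w l z"
  unfolding diamond_ext_def
  apply (erule conjE)
  apply (rule conjI)
   apply (erule diamond_sym)
  apply assumption
  done

locale dsetup =
  fixes P :: "'a::order set" and C1 C2 :: "'a set set" and Q a b :: "'a set" and x y :: 'a
    and k :: nat and w :: "nat \<Rightarrow> 'a" and l :: nat and z :: "nat \<Rightarrow> 'a" and A1 A2 B1 B2 :: "'a set"
  assumes N: "in_N2 P C1 C2" and D: "diamond_ext P Q a b x y k w l z"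
    and A1: "A1 \<in> C1" "a - {y} \<subseteq> A1" and B1: "B1 \<in> C1" "b - {x} \<subseteq> B1"
    and B2: "B2 \<in> C2" "b - {y} \<subseteq> B2" and A2: "A2 \<in> C2" "a - {x} \<subseteq> A2"
begin

lemma swap: "dsetup P C2 C1 Q b a x y k w l z B2 B1 A2 A1"
  using in_N2_sym[OF N] dext_sym[OF D] A1 A2 B1 B2 by unfold_locales auto

definition Gr where
  "Gr = {(u, v). u \<in> Q \<and> v \<in> Q \<and> u \<le> v}
              \<union> {(w (Suc i), w i) | i. 1 \<le> i \<and> i < k} \<union> {(w 1, x), (y, z 1)}
              \<union> {(z i, z (Suc i)) | i. 1 \<le> i \<and> i < l}"

abbreviation "Cs \<equiv> w ` {1..k}"
abbreviation "Ds \<equiv> z ` {1..l}"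
abbreviation "R \<equiv> Q \<union> w ` {1..k} \<union> z ` {1..l}"

lemma fin: "finite P" and cc1: "chain_cover P C1" and cc2: "chain_cover P C2"
  and sc12: "sort_compat C1 C2" and sc21: "sort_compat C2 C1"
  and edges: "\<And>u v. covers P u v \<Longrightarrow> \<exists>c\<in>C1 \<union> C2. u \<in> c \<and> v \<in> c"
  using N unfolding in_N2_def by auto

lemma dia: "diamond P Q a b x y" using D unfolding diamond_ext_def by (elim conjE)

lemma Qconv: "convex_in P Q" and Qab: "Q = a \<union> b" and sa: "sat_chain P a" and sb: "sat_chain P b"
  and aneb: "a \<noteq> b" and abint: "a \<inter> b = {x, y}" and xa: "x \<in> a" and xb: "x \<in> b"
  and ya: "y \<in> a" and yb: "y \<in> b" and betw: "\<And>u. u \<in> a \<union> b \<Longrightarrow> x \<le> u \<and> u \<le> y"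
  using dia unfolding diamond_def by auto

lemma Dall: "diamond P Q a b x y \<and> 1 \<le> k \<and> 1 \<le> l \<and>
     inj_on w {1..k} \<and> inj_on z {1..l} \<and>
     w ` {1..k} \<inter> Q = {} \<and> z ` {1..l} \<inter> Q = {} \<and> w ` {1..k} \<inter> z ` {1..l} = {} \<and>
     convex_in P (Q \<union> w ` {1..k} \<union> z ` {1..l}) \<and>
     (\<forall>i. 1 \<le> i \<and> i < k \<longrightarrow> covers P (w (Suc i)) (w i)) \<and> covers P (w 1) x \<and>
     (\<forall>i. 1 \<le> i \<and> i < l \<longrightarrow> covers P (z i) (z (Suc i))) \<and> covers P y (z 1) \<and>
     (\<forall>u\<in>R. \<forall>v\<in>R. u \<le> v \<longleftrightarrow> (u, v) \<in> Gr\<^sup>*)"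
  using D unfolding diamond_ext_def Let_def Gr_def by (elim conjE) (intro conjI; assumption)

lemma k1: "1 \<le> k" and l1: "1 \<le> l" and injw: "inj_on w {1..k}" and injz: "inj_on z {1..l}"
  and wQ: "w ` {1..k} \<inter> Q = {}" and zQ: "z ` {1..l} \<inter> Q = {}"
  and wz: "w ` {1..k} \<inter> z ` {1..l} = {}"
  and Rconv: "convex_in P R"
  and wcov: "\<And>i. 1 \<le> i \<Longrightarrow> i < k \<Longrightarrow> covers P (w (Suc i)) (w i)"
  and w1x: "covers P (w 1) x"
  and zcov: "\<And>i. 1 \<le> i \<Longrightarrow> i < l \<Longrightarrow> covers P (z i) (z (Suc i))"
  and yz1: "covers P y (z 1)"
  and Gchar: "\<forall>u\<in>R. \<forall>v\<in>R. u \<le> v \<longleftrightarrow> (u, v) \<in> Gr\<^sup>*"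
  using Dall by blast+

lemma aP: "a \<subseteq> P" and bP: "b \<subseteq> P" using sa sb unfolding sat_chain_def by auto
lemma fina: "finite a" using aP fin finite_subset by blast
lemma tota: "\<forall>u\<in>a. \<forall>v\<in>a. u \<le> v \<or> v \<le> u" using sa unfolding sat_chain_def by blast
lemma sata: "\<And>u v. u \<in> a \<Longrightarrow> v \<in> a \<Longrightarrow> u < v \<Longrightarrow> \<not> (\<exists>w\<in>a. u < w \<and> w < v) \<Longrightarrow> covers P u v"
  using sa unfolding sat_chain_def by blast

lemma x_lt_y: "x < y"
proof -
  have "x \<le> y" using betw xa by auto
  moreover have "x \<noteq> y"
  proof
    assume "x = y"
    then have "\<forall>u\<in>a \<union> b. u = x" using betw by (metis order_antisym)
    then have "a = {x}" "b = {x}" using xa xb by auto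
    then show False using aneb by simp
  qed
  ultimately show ?thesis by simp
qed

lemma a_mid: "\<exists>h\<in>a. h \<noteq> x \<and> h \<noteq> y"
proof (rule ccontr)
  assume "\<not> ?thesis"
  then have aeq: "a = {x, y}" using xa ya by auto
  have cxy: "covers P x y" using sata[OF xa ya x_lt_y] aeq by auto
  have "b \<noteq> {x, y}" using aneb aeq by simp
  then obtain h where h: "h \<in> b" "h \<noteq> x" "h \<noteq> y" using xb yb by auto
  have "x < h" "h < y" using betw[of h] h by (auto simp: less_le)
  moreover have "h \<in> P" using h bP by auto
  ultimately show False using cxy unfolding covers_def by auto
qed

lemma ga_ex: "\<exists>g\<in>a. g \<noteq> x \<and> g \<noteq> y \<and> covers P g y \<and> (\<forall>h\<in>a. h \<noteq> y \<longrightarrow> h \<le> g)"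
proof -
  obtain g where g: "g \<in> a - {y}" "\<forall>h\<in>a - {y}. h \<le> g"
    using total_max[of "a - {y}"] fina tota xa x_lt_y by (auto simp: less_le)
  obtain h where h: "h \<in> a" "h \<noteq> x" "h \<noteq> y" using a_mid by blast
  have "x < h" using betw[of h] h by (auto simp: less_le)
  also have "h \<le> g" using g h by auto
  finally have xg: "x < g" .
  have gy: "g < y" using betw[of g] g by (auto simp: less_le)
  have "covers P g y"
  proof (rule sata)
    show "g \<in> a" "y \<in> a" "g < y" using g ya gy by auto
    show "\<not> (\<exists>w\<in>a. g < w \<and> w < y)"
    proof
      assume "\<exists>w\<in>a. g < w \<and> w < y"
      then obtain w where w: "w \<in> a" "g < w" "w < y" by blast
      then have "w \<le> g" using g by auto
      then show False using w by simp
    qed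
  qed
  then show ?thesis using g xg by (auto simp: less_le)
qed

lemma fa_ex: "\<exists>f\<in>a. f \<noteq> x \<and> f \<noteq> y \<and> covers P x f \<and> (\<forall>h\<in>a. h \<noteq> x \<longrightarrow> f \<le> h)"
proof -
  obtain g where g: "g \<in> a - {x}" "\<forall>h\<in>a - {x}. g \<le> h"
    using total_min[of "a - {x}"] fina tota ya x_lt_y by (auto simp: less_le)
  obtain h where h: "h \<in> a" "h \<noteq> x" "h \<noteq> y" using a_mid by blast
  have "g \<le> h" using g h by auto
  also have "h < y" using betw[of h] h by (auto simp: less_le)
  finally have gy: "g < y" .
  have xg: "x < g" using betw[of g] g by (auto simp: less_le)
  have "covers P x g"
  proof (rule sata)
    show "x \<in> a" "g \<in> a" "x < g" using g xa xg by auto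
    show "\<not> (\<exists>w\<in>a. x < w \<and> w < g)"
    proof
      assume "\<exists>w\<in>a. x < w \<and> w < g"
      then obtain w where w: "w \<in> a" "x < w" "w < g" by blast
      then have "g \<le> w" using g by auto
      then show False using w by simp
    qed
  qed
  then show ?thesis using g gy by (auto simp: less_le)
qed


lemma cP: "c \<in> C1 \<Longrightarrow> c \<subseteq> P" "c \<in> C2 \<Longrightarrow> c \<subseteq> P"
  using cc_sub[OF cc1] cc_sub[OF cc2] by auto

lemma no_chain:
  assumes ab: "a \<union> b \<subseteq> c" and tc: "\<forall>u\<in>c. \<forall>v\<in>c. u \<le> v \<or> v \<le> u"
  shows False
proof -
  interpret s: dsetup P C2 C1 Q b a x y k w l z B2 B1 A2 A1 by (rule swap)
  obtain h where h: "h \<in> b" "h \<noteq> x" "h \<noteq> y" using s.a_mid by blast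
  have ha: "h \<notin> a" using h abint by auto
  have xh: "x < h" and hy: "h < y" using betw[of h] h by (auto simp: less_le)
  have hP: "h \<in> P" using h bP by auto
  have cmp: "\<forall>u\<in>a. u < h \<or> h < u"
  proof
    fix u assume u: "u \<in> a"
    then have "u \<noteq> h" using ha by auto
    moreover have "u \<le> h \<or> h \<le> u" using tc ab u h by blast
    ultimately show "u < h \<or> h < u" by (auto simp: less_le)
  qed
  have f1: "finite {u\<in>a. u < h}" "finite {u\<in>a. h < u}" using fina by auto
  have t1: "\<forall>u\<in>{u\<in>a. u < h}. \<forall>v\<in>{u\<in>a. u < h}. u \<le> v \<or> v \<le> u"
   "\<forall>u\<in>{u\<in>a. h < u}. \<forall>v\<in>{u\<in>a. h < u}. u \<le> v \<or> v \<le> u" using tota by auto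
  have n1: "{u\<in>a. u < h} \<noteq> {}" "{u\<in>a. h < u} \<noteq> {}" using xa xh ya hy by auto
  obtain lo where lo: "lo \<in> a" "lo < h" "\<forall>u\<in>{u\<in>a. u < h}. u \<le> lo"
    using total_max[OF f1(1) n1(1) t1(1)] by auto
  obtain hi where hi: "hi \<in> a" "h < hi" "\<forall>u\<in>{u\<in>a. h < u}. hi \<le> u"
    using total_min[OF f1(2) n1(2) t1(2)] by auto
  have "covers P lo hi"
  proof (rule sata)
    show "lo \<in> a" "hi \<in> a" using lo hi by auto
    show "lo < hi" using lo hi by auto
    show "\<not> (\<exists>w\<in>a. lo < w \<and> w < hi)"
    proof
      assume "\<exists>w\<in>a. lo < w \<and> w < hi"
      then obtain u where u: "u \<in> a" "lo < u" "u < hi" by blast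
      from cmp u(1) have "u < h \<or> h < u" by blast
      then show False
      proof
        assume "u < h" then have "u \<le> lo" using lo u by auto
        then show False using u by simp
      next
        assume "h < u" then have "hi \<le> u" using hi u by auto
        then show False using u by simp
      qed
    qed
  qed
  then show False using hP lo hi unfolding covers_def by auto
qed

lemma A1B1: "A1 \<inter> B1 = {}"
proof -
  have "A1 \<noteq> B1"
  proof
    assume e: "A1 = B1"
    have "a \<union> b \<subseteq> A1"
    proof
      fix u assume "u \<in> a \<union> b"
      then show "u \<in> A1" using A1 B1 e x_lt_y by (cases "u = x"; cases "u = y") (auto simp: xa yb)
    qed
    then show False using no_chain cc_tot[OF cc1 A1(1)] by blast
  qed
  then show ?thesis using cc1 A1(1) B1(1) unfolding chain_cover_def by blast
qed

lemma A2B2: "A2 \<inter> B2 = {}"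
proof -
  have "A2 \<noteq> B2"
  proof
    assume e: "A2 = B2"
    have "a \<union> b \<subseteq> A2"
    proof
      fix u assume "u \<in> a \<union> b"
      then show "u \<in> A2" using A2 B2 e x_lt_y by (cases "u = x"; cases "u = y") (auto simp: xb ya)
    qed
    then show False using no_chain cc_tot[OF cc2 A2(1)] by blast
  qed
  then show ?thesis using cc2 A2(1) B2(1) unfolding chain_cover_def by blast
qed

lemma xA1: "x \<in> A1" and xB2: "x \<in> B2" and yB1: "y \<in> B1" and yA2: "y \<in> A2"
  using A1 A2 B1 B2 xa xb ya yb x_lt_y by auto

lemma RP: "R \<subseteq> P" using Rconv unfolding convex_in_def by blast
lemma Rconv': "u \<in> R \<Longrightarrow> v \<in> R \<Longrightarrow> h \<in> P \<Longrightarrow> u \<le> h \<Longrightarrow> h \<le> v \<Longrightarrow> h \<in> R"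
  using Rconv unfolding convex_in_def by blast
lemma Qconv': "u \<in> Q \<Longrightarrow> v \<in> Q \<Longrightarrow> h \<in> P \<Longrightarrow> u \<le> h \<Longrightarrow> h \<le> v \<Longrightarrow> h \<in> Q"
  using Qconv unfolding convex_in_def by blast

lemma wnQ: "j \<in> {1..k} \<Longrightarrow> w j \<notin> Q" "j \<in> {1..k} \<Longrightarrow> w j \<notin> z ` {1..l}"
  using wQ wz by blast+
lemma znQ: "j \<in> {1..l} \<Longrightarrow> z j \<notin> Q" "j \<in> {1..l} \<Longrightarrow> z j \<notin> w ` {1..k}"
  using zQ wz by blast+

lemma F_up:
  assumes h: "h \<in> R" and q: "q \<in> Q" and qh: "q \<le> h"
  shows "h \<in> Q \<or> h \<in> z ` {1..l}"
proof -
  have "(q, h) \<in> Gr\<^sup>*" using Gchar h q qh by blast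
  then show ?thesis
  proof (induction rule: rtrancl_induct)
    case base then show ?case using q by simp
  next
    case (step h1 h2)
    from step.hyps(2) show ?case
      unfolding Gr_def
    proof (elim UnE)
      assume "(h1, h2) \<in> {(u, v). u \<in> Q \<and> v \<in> Q \<and> u \<le> v}" then show ?case by auto
    next
      assume "(h1, h2) \<in> {(w (Suc i), w i) | i. 1 \<le> i \<and> i < k}"
      then obtain i where "h1 = w (Suc i)" "1 \<le> i" "i < k" by auto
      then have "Suc i \<in> {1..k}" "h1 = w (Suc i)" by auto
      then show ?case using step.IH wnQ by blast
    next
      assume "(h1, h2) \<in> {(w 1, x), (y, z 1)}"
      then show ?case
      proof
        assume "(h1, h2) = (w 1, x)"
        then have "h1 = w 1" "1 \<in> {1..k}" using k1 by auto
        then show ?case using step.IH wnQ by blast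
      next
        assume "(h1, h2) \<in> {(y, z 1)}"
        then show ?case using l1 by auto
      qed
    next
      assume "(h1, h2) \<in> {(z i, z (Suc i)) | i. 1 \<le> i \<and> i < l}"
      then show ?case by auto
    qed
  qed
qed

lemma F_down:
  assumes h: "h \<in> R" and q: "q \<in> Q" and qh: "h \<le> q"
  shows "h \<in> Q \<or> h \<in> w ` {1..k}"
proof -
  have "(h, q) \<in> Gr\<^sup>*" using Gchar h q qh by blast
  then show ?thesis
  proof (induction rule: converse_rtrancl_induct)
    case base then show ?case using q by simp
  next
    case (step h1 h2)
    from step.hyps(1) show ?case
      unfolding Gr_def
    proof (elim UnE)
      assume "(h1, h2) \<in> {(u, v). u \<in> Q \<and> v \<in> Q \<and> u \<le> v}" then show ?case by auto
    next
      assume "(h1, h2) \<in> {(w (Suc i), w i) | i. 1 \<le> i \<and> i < k}"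
      then show ?case by auto
    next
      assume "(h1, h2) \<in> {(w 1, x), (y, z 1)}"
      then show ?case
      proof
        assume "(h1, h2) = (w 1, x)"
        then show ?case using k1 by auto
      next
        assume "(h1, h2) \<in> {(y, z 1)}"
        then have "h2 = z 1" "1 \<in> {1..l}" using l1 by auto
        then show ?case using step.IH znQ by blast
      qed
    next
      assume "(h1, h2) \<in> {(z i, z (Suc i)) | i. 1 \<le> i \<and> i < l}"
      then obtain i where "h2 = z (Suc i)" "1 \<le> i" "i < l" by auto
      then have "Suc i \<in> {1..l}" "h2 = z (Suc i)" by auto
      then show ?case using step.IH znQ by blast
    qed
  qed
qed

lemma zlt: "1 \<le> i \<Longrightarrow> i < j \<Longrightarrow> j \<le> l \<Longrightarrow> z i < z j"
proof (induction j)
  case 0 then show ?case by simp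
next
  case (Suc j)
  have c: "z j < z (Suc j)" if "1 \<le> j"
    using zcov[of j] that Suc.prems unfolding covers_def by auto
  show ?case
  proof (cases "i = j")
    case True then show ?thesis using c Suc.prems by auto
  next
    case False
    then have "z i < z j" using Suc by auto
    moreover have "z j < z (Suc j)" using c Suc.prems False by auto
    ultimately show ?thesis by simp
  qed
qed

lemma wlt: "1 \<le> i \<Longrightarrow> i < j \<Longrightarrow> j \<le> k \<Longrightarrow> w j < w i"
proof (induction j)
  case 0 then show ?case by simp
next
  case (Suc j)
  have c: "w (Suc j) < w j" if "1 \<le> j"
    using wcov[of j] that Suc.prems unfolding covers_def by auto
  show ?case
  proof (cases "i = j")
    case True then show ?thesis using c Suc.prems by auto
  next
    case False
    then have "w j < w i" using Suc by auto
    moreover have "w (Suc j) < w j" using c Suc.prems False by auto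
    ultimately show ?thesis by simp
  qed
qed

lemma yz: "j \<in> {1..l} \<Longrightarrow> y < z j"
proof -
  assume j: "j \<in> {1..l}"
  have "y < z 1" using yz1 unfolding covers_def by auto
  moreover have "j = 1 \<or> z 1 < z j"
  proof (cases "j = 1")
    case False then have "1 < j" using j by auto
    then show ?thesis using j zlt[of 1 j] by auto
  qed simp
  ultimately show "y < z j" by auto
qed

lemma wx: "j \<in> {1..k} \<Longrightarrow> w j < x"
proof -
  assume j: "j \<in> {1..k}"
  have "w 1 < x" using w1x unfolding covers_def by auto
  moreover have "j = 1 \<or> w j < w 1"
  proof (cases "j = 1")
    case False then have "1 < j" using j by auto
    then show ?thesis using j wlt[of 1 j] by auto
  qed simp
  ultimately show "w j < x" by auto
qed


lemma top_step:
  assumes i: "i < l" and IH: "\<forall>j\<in>{1..i}. z j \<in> A2 \<and> z j \<in> B1" and vB: "z (Suc i) \<in> B1"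
  shows "z (Suc i) \<in> A2"
proof (rule ccontr)
  assume vA: "z (Suc i) \<notin> A2"
  obtain g where g: "g \<in> a" "g \<noteq> x" "g \<noteq> y" "covers P g y" "\<forall>h\<in>a. h \<noteq> y \<longrightarrow> h \<le> g"
    using ga_ex by blast
  define u where "u = (if i = 0 then y else z i)"
  have uA2: "u \<in> A2" and uB1: "u \<in> B1" using IH yA2 yB1 i unfolding u_def by auto
  have yu: "y \<le> u" using yz[of i] i unfolding u_def by (auto simp: less_imp_le)
  have gy: "g < y" using g(4) unfolding covers_def by auto
  have gu: "g < u" using gy yu by simp
  have cov: "covers P u (z (Suc i))" using zcov[of i] yz1 i unfolding u_def by auto
  have gA: "g \<in> A1" "g \<in> A2" using g A1 A2 by auto
  show False
  proof (rule up_step[OF fin cc1 cc2 sc12 A1(1) gA(1) A2(1) gA(2) uA2 B1(1) uB1 vB gu cov vA])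
    show "\<forall>h\<in>A1. g < h \<longrightarrow> h \<le> z (Suc i) \<longrightarrow> False"
    proof (intro ballI impI)
      fix h assume h: "h \<in> A1" "g < h" "h \<le> z (Suc i)"
      have hP: "h \<in> P" using h cP A1 by auto
      have gR: "g \<in> R" using g Qab by auto
      have vR: "z (Suc i) \<in> R" using i by auto
      have hR: "h \<in> R" using Rconv'[OF gR vR hP] h by auto
      have "h \<in> Q \<or> h \<in> Ds" using F_up[OF hR _ less_imp_le[OF h(2)]] g Qab by auto
      then have "h \<in> B1"
      proof
        assume hQ: "h \<in> Q"
        then have hy: "h \<le> y" using betw Qab by auto
        have "h = y"
        proof (rule ccontr)
          assume "h \<noteq> y" then have "h < y" using hy by simp
          then show False using g(4) h hP unfolding covers_def by auto
        qed
        then show ?thesis using yB1 by simp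
      next
        assume "h \<in> Ds"
        then obtain j where j: "j \<in> {1..l}" "h = z j" by auto
        show ?thesis
        proof (cases "j \<le> i")
          case True then show ?thesis using IH j by auto
        next
          case False
          show ?thesis
          proof (cases "j = Suc i")
            case True then show ?thesis using vB j by simp
          next
            case False
            then have "Suc i < j" using \<open>\<not> j \<le> i\<close> by simp
            then have "z (Suc i) < z j" using zlt j by auto
            then show ?thesis using h j leD by blast
          qed
        qed
      qed
      then show False using h A1B1 by auto
    qed
  qed
qed

lemma bot_step:
  assumes i: "i < k" and IH: "\<forall>j\<in>{1..i}. w j \<in> A1 \<and> w j \<in> B2" and vB: "w (Suc i) \<in> B2"
  shows "w (Suc i) \<in> A1"
proof (rule ccontr)
  assume vA: "w (Suc i) \<notin> A1"
  obtain f where f: "f \<in> a" "f \<noteq> x" "f \<noteq> y" "covers P x f" "\<forall>h\<in>a. h \<noteq> x \<longrightarrow> f \<le> h"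
    using fa_ex by blast
  define u where "u = (if i = 0 then x else w i)"
  have uA1: "u \<in> A1" and uB2: "u \<in> B2" using IH xA1 xB2 i unfolding u_def by auto
  have ux: "u \<le> x" using wx[of i] i unfolding u_def by (auto simp: less_imp_le)
  have xf: "x < f" using f(4) unfolding covers_def by auto
  have uf: "u < f" using xf ux by simp
  have cov: "covers P (w (Suc i)) u" using wcov[of i] w1x i unfolding u_def by auto
  have fA: "f \<in> A1" "f \<in> A2" using f A1 A2 by auto
  show False
  proof (rule down_step[OF fin cc2 cc1 sc21 A2(1) fA(2) A1(1) fA(1) uA1 B2(1) uB2 vB uf cov vA])
    show "\<forall>h\<in>A2. w (Suc i) \<le> h \<longrightarrow> h < f \<longrightarrow> False"
    proof (intro ballI impI)
      fix h assume h: "h \<in> A2" "w (Suc i) \<le> h" "h < f"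
      have hP: "h \<in> P" using h cP A2 by auto
      have fR: "f \<in> R" using f Qab by auto
      have vR: "w (Suc i) \<in> R" using i by auto
      have hR: "h \<in> R" using Rconv'[OF vR fR hP] h by auto
      have "h \<in> Q \<or> h \<in> Cs" using F_down[OF hR _ less_imp_le[OF h(3)]] f Qab by auto
      then have "h \<in> B2"
      proof
        assume hQ: "h \<in> Q"
        then have hy: "x \<le> h" using betw Qab by auto
        have "h = x"
        proof (rule ccontr)
          assume "h \<noteq> x" then have "x < h" using hy by simp
          then show False using f(4) h hP unfolding covers_def by auto
        qed
        then show ?thesis using xB2 by simp
      next
        assume "h \<in> Cs"
        then obtain j where j: "j \<in> {1..k}" "h = w j" by auto
        show ?thesis
        proof (cases "j \<le> i")
          case True then show ?thesis using IH j by auto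
        next
          case False
          show ?thesis
          proof (cases "j = Suc i")
            case True then show ?thesis using vB j by simp
          next
            case False
            then have "Suc i < j" using \<open>\<not> j \<le> i\<close> by simp
            then have "w j < w (Suc i)" using wlt j by auto
            then show ?thesis using h j leD by blast
          qed
        qed
      qed
      then show False using h A2B2 by auto
    qed
  qed
qed

lemma top_incl: "i \<le> l \<Longrightarrow> \<forall>j\<in>{1..i}. z j \<in> A2 \<and> z j \<in> B1"
proof (induction i)
  case 0 show ?case by simp
next
  case (Suc i)
  interpret s: dsetup P C2 C1 Q b a x y k w l z B2 B1 A2 A1 by (rule swap)
  have IH: "\<forall>j\<in>{1..i}. z j \<in> A2 \<and> z j \<in> B1" using Suc by simp
  have IH': "\<forall>j\<in>{1..i}. z j \<in> B1 \<and> z j \<in> A2" using IH by blast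
  have il: "i < l" using Suc.prems by simp
  define u where "u = (if i = 0 then y else z i)"
  have uA2: "u \<in> A2" and uB1: "u \<in> B1" using IH yA2 yB1 il unfolding u_def by auto
  have cov: "covers P u (z (Suc i))" using zcov[of i] yz1 il unfolding u_def by auto
  obtain c where c: "c \<in> C1 \<union> C2" "u \<in> c" "z (Suc i) \<in> c" using edges[OF cov] by blast
  have "z (Suc i) \<in> B1 \<or> z (Suc i) \<in> A2"
  proof (cases "c \<in> C1")
    case True then have "c = B1" using cc_unique[OF cc1 True B1(1) c(2) uB1] by simp
    then show ?thesis using c by simp
  next
    case False then have "c \<in> C2" using c by simp
    then have "c = A2" using cc_unique[OF cc2 _ A2(1) c(2) uA2] by simp
    then show ?thesis using c by simp
  qed
  then have "z (Suc i) \<in> A2 \<and> z (Suc i) \<in> B1"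
    using top_step[OF il IH] s.top_step[OF il IH'] by blast
  then show ?case using IH by (auto simp: le_Suc_eq)
qed

lemma bot_incl: "i \<le> k \<Longrightarrow> \<forall>j\<in>{1..i}. w j \<in> A1 \<and> w j \<in> B2"
proof (induction i)
  case 0 show ?case by simp
next
  case (Suc i)
  interpret s: dsetup P C2 C1 Q b a x y k w l z B2 B1 A2 A1 by (rule swap)
  have IH: "\<forall>j\<in>{1..i}. w j \<in> A1 \<and> w j \<in> B2" using Suc by simp
  have IH': "\<forall>j\<in>{1..i}. w j \<in> B2 \<and> w j \<in> A1" using IH by blast
  have il: "i < k" using Suc.prems by simp
  define u where "u = (if i = 0 then x else w i)"
  have uA1: "u \<in> A1" and uB2: "u \<in> B2" using IH xA1 xB2 il unfolding u_def by auto
  have cov: "covers P (w (Suc i)) u" using wcov[of i] w1x il unfolding u_def by auto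
  obtain c where c: "c \<in> C1 \<union> C2" "w (Suc i) \<in> c" "u \<in> c" using edges[OF cov] by blast
  have "w (Suc i) \<in> A1 \<or> w (Suc i) \<in> B2"
  proof (cases "c \<in> C1")
    case True then have "c = A1" using cc_unique[OF cc1 True A1(1) c(3) uA1] by simp
    then show ?thesis using c by simp
  next
    case False then have "c \<in> C2" using c by simp
    then have "c = B2" using cc_unique[OF cc2 _ B2(1) c(3) uB2] by simp
    then show ?thesis using c by simp
  qed
  then have "w (Suc i) \<in> A1 \<and> w (Suc i) \<in> B2"
    using bot_step[OF il IH] s.bot_step[OF il IH'] by blast
  then show ?case using IH by (auto simp: le_Suc_eq)
qed


lemma zle: "j \<in> {1..l} \<Longrightarrow> z j \<le> z l"
  using zlt[of j l] by (cases "j = l") (auto simp: less_imp_le)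

lemma wle: "j \<in> {1..k} \<Longrightarrow> w k \<le> w j"
  using wlt[of j k] by (cases "j = k") (auto simp: less_imp_le)

lemma card_mid: "card (a - {x, y}) = card a - 2"
proof -
  have "card (a - {x, y}) = card a - card {x, y}" using fina xa ya by (intro card_Diff_subset) auto
  moreover have "card {x, y} = 2" using x_lt_y by auto
  ultimately show ?thesis by simp
qed

lemma finA2: "finite A2" and finA1: "finite A1" and finB1: "finite B1" and finB2: "finite B2"
  using cP A1 A2 B1 B2 fin finite_subset by metis+

lemma top_bound: "l < card a - 2"
proof (rule ccontr)
  assume "\<not> l < card a - 2" then have cl: "card a - 2 \<le> l" by simp
  interpret s: dsetup P C2 C1 Q b a x y k w l z B2 B1 A2 A1 by (rule swap)
  obtain g where g: "g \<in> b" "g \<noteq> x" "g \<noteq> y" "covers P g y" "\<forall>h\<in>b. h \<noteq> y \<longrightarrow> h \<le> g"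
    using s.ga_ex by blast
  have Dincl: "\<forall>j\<in>{1..l}. z j \<in> A2 \<and> z j \<in> B1" using top_incl[of l] by simp
  define S where "S = {h. h \<in> A1 \<and> x \<le> h} \<union> {h\<in>P. \<not> h \<le> z l}"
  have up: "\<forall>c\<in>C1. \<forall>u\<in>c. \<forall>v\<in>c. u \<le> v \<longrightarrow> u \<in> S \<longrightarrow> v \<in> S"
  proof (intro ballI impI)
    fix c u v assume h: "c \<in> C1" "u \<in> c" "v \<in> c" "u \<le> v" "u \<in> S"
    show "v \<in> S"
    proof (cases "u \<in> A1 \<and> x \<le> u")
      case True then have "c = A1" using cc_unique[OF cc1 h(1) A1(1) h(2)] by blast
      then show ?thesis using True h unfolding S_def by (auto intro: order_trans)
    next
      case False then have "u \<in> P" "\<not> u \<le> z l" using h unfolding S_def by auto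
      moreover have "v \<in> P" using h cP by auto
      ultimately show ?thesis using h unfolding S_def by (auto intro: order_trans)
    qed
  qed
  have gB2: "g \<in> B2" using g B2 by auto
  have gB1: "g \<in> B1" using g B1 by auto
  have gy: "g \<le> y" using g(4) unfolding covers_def by auto
  have xg: "x \<le> g" using betw g by auto
  have zlA2: "z l \<in> A2" and zlB1: "z l \<in> B1" using Dincl l1 by auto
  have zR: "z l \<in> R" using l1 by auto
  have k1': "card {h\<in>B2. g \<le> h} \<le> card (S \<inter> B2)"
  proof -
    have sub: "{h\<in>B2. g < h} \<subseteq> S"
    proof
      fix h assume h: "h \<in> {h\<in>B2. g < h}"
      have hP: "h \<in> P" using h cP B2 by auto
      have "\<not> h \<le> z l"
      proof
        assume hz: "h \<le> z l"
        have gR: "g \<in> R" using g Qab by auto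
        have hR: "h \<in> R" using Rconv'[OF gR zR hP] h hz by auto
        have gQ: "g \<in> Q" using g Qab by auto
        have ghl: "g \<le> h" using h by auto
        have "h \<in> Q \<or> h \<in> Ds" using F_up[OF hR gQ ghl] .
        then show False
        proof
          assume "h \<in> Q" then have hy: "h \<le> y" using betw Qab by auto
          show False
          proof (cases "h = y")
            case True then show False using h yA2 A2B2 by auto
          next
            case False then show False using g(4) h hP hy unfolding covers_def by (auto simp: less_le)
          qed
        next
          assume "h \<in> Ds" then show False using h Dincl A2B2 by auto
        qed
      qed
      then show "h \<in> S" using hP unfolding S_def by auto
    qed
    have "{h\<in>B2. g \<le> h} = insert g {h\<in>B2. g < h}" using gB2 by (auto simp: less_le)
    then have "card {h\<in>B2. g \<le> h} = Suc (card {h\<in>B2. g < h})" using finB2 by simp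
    also have "\<dots> = card (insert x {h\<in>B2. g < h})"
    proof -
      have "x \<notin> {h\<in>B2. g < h}" using xg by auto
      then show ?thesis using finB2 by simp
    qed
    also have "\<dots> \<le> card (S \<inter> B2)"
      using sub xA1 xB2 finB2 unfolding S_def by (intro card_mono) auto
    finally show ?thesis .
  qed
  have k2': "card (S \<inter> A2) < card {h\<in>A2. y \<le> h}"
  proof -
    define U where "U = {h\<in>A2. z l < h}"
    have sub: "S \<inter> A2 \<subseteq> (a - {x, y}) \<union> U"
    proof
      fix h assume h: "h \<in> S \<inter> A2"
      have hP: "h \<in> P" using h cP A2 by auto
      have tot: "h \<le> y \<or> y \<le> h" "h \<le> z l \<or> z l \<le> h"
        using cc_tot[OF cc2 A2(1)] h yA2 zlA2 by auto
      show "h \<in> (a - {x, y}) \<union> U"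
      proof (cases "h \<in> A1 \<and> x \<le> h")
        case hA: True
        show ?thesis
        proof (cases "h \<le> y")
          case True
          have "h \<in> Q" using Qconv'[of x y h] xa ya Qab hP hA True by auto
          then have "h \<in> a \<or> h \<in> b" using Qab by auto
          moreover have "h \<noteq> x" using h xB2 A2B2 by auto
          moreover have "h \<noteq> y" using hA yB1 A1B1 by auto
          moreover have "h \<notin> b - {x}" using hA B1 A1B1 by auto
          ultimately show ?thesis by auto
        next
          case False
          then have yh: "y \<le> h" using tot by auto
          have "\<not> h \<le> z l"
          proof
            assume hz: "h \<le> z l"
            have yR: "y \<in> R" using ya Qab by auto
            have hR: "h \<in> R" using Rconv'[OF yR zR hP yh hz] .
            have "h \<in> Q \<or> h \<in> Ds" using F_up[OF hR _ yh] ya Qab by auto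
            then show False
            proof
              assume "h \<in> Q" then show False using betw Qab False by auto
            next
              assume "h \<in> Ds" then show False using Dincl hA A1B1 by auto
            qed
          qed
          then have "z l < h" using tot by (auto simp: less_le)
          then show ?thesis using h unfolding U_def by auto
        qed
      next
        case False
        then have "\<not> h \<le> z l" using h unfolding S_def by auto
        then have "z l < h" using tot by (auto simp: less_le)
        then show ?thesis using h unfolding U_def by auto
      qed
    qed
    have fU: "finite U" using finA2 unfolding U_def by auto
    have "card (S \<inter> A2) \<le> card ((a - {x, y}) \<union> U)" using sub fina fU by (intro card_mono) auto
    also have "\<dots> \<le> card (a - {x, y}) + card U" by (rule card_Un_le)
    finally have c1: "card (S \<inter> A2) \<le> card a - 2 + card U" using card_mid by simp
    have yzl: "y < z l" using yz l1 by auto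
    have ins: "insert y (Ds \<union> U) \<subseteq> {h\<in>A2. y \<le> h}"
      using Dincl yA2 yz yzl unfolding U_def by (auto intro: less_imp_le dest: order.strict_trans)
    have yn: "y \<notin> Ds \<union> U"
    proof
      assume "y \<in> Ds \<union> U"
      then show False
      proof
        assume "y \<in> Ds" then obtain j where "j \<in> {1..l}" "y = z j" by auto
        then show False using yz[of j] by simp
      next
        assume "y \<in> U" then show False using yzl unfolding U_def by auto
      qed
    qed
    have dU: "Ds \<inter> U = {}" using zle unfolding U_def by (auto simp: less_le_not_le)
    have cD: "card Ds = l" using card_image[OF injz] by simp
    have "card (insert y (Ds \<union> U)) = Suc (l + card U)"
      using yn dU cD fU card_Un_disjoint[of Ds U] by simp
    moreover have "card (insert y (Ds \<union> U)) \<le> card {h\<in>A2. y \<le> h}"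
      using ins finA2 by (intro card_mono) auto
    ultimately show ?thesis using c1 cl by linarith
  qed
  show False using sort_up[OF fin cc1 cc2 sc12 up B1(1) gB1 yB1 gy B2(1) gB2 k1' A2(1) yA2 k2'] .
qed

lemma bot_bound: "k < card a - 2"
proof (rule ccontr)
  assume "\<not> k < card a - 2" then have cl: "card a - 2 \<le> k" by simp
  interpret s: dsetup P C2 C1 Q b a x y k w l z B2 B1 A2 A1 by (rule swap)
  obtain f where f: "f \<in> b" "f \<noteq> x" "f \<noteq> y" "covers P x f" "\<forall>h\<in>b. h \<noteq> x \<longrightarrow> f \<le> h"
    using s.fa_ex by blast
  have Cincl: "\<forall>j\<in>{1..k}. w j \<in> A1 \<and> w j \<in> B2" using bot_incl[of k] by simp
  define Z where "Z = {h. h \<in> A2 \<and> h \<le> y} \<union> {h\<in>P. \<not> w k \<le> h}"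
  have dn: "\<forall>c\<in>C2. \<forall>u\<in>c. \<forall>v\<in>c. u \<le> v \<longrightarrow> v \<in> Z \<longrightarrow> u \<in> Z"
  proof (intro ballI impI)
    fix c u v assume h: "c \<in> C2" "u \<in> c" "v \<in> c" "u \<le> v" "v \<in> Z"
    show "u \<in> Z"
    proof (cases "v \<in> A2 \<and> v \<le> y")
      case True then have "c = A2" using cc_unique[OF cc2 h(1) A2(1) h(3)] by blast
      then show ?thesis using True h unfolding Z_def by (auto intro: order_trans)
    next
      case False then have "v \<in> P" "\<not> w k \<le> v" using h unfolding Z_def by auto
      moreover have "u \<in> P" using h cP by auto
      ultimately show ?thesis using h unfolding Z_def by (auto intro: order_trans)
    qed
  qed
  have fB1: "f \<in> B1" using f B1 by auto
  have fB2: "f \<in> B2" using f B2 by auto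
  have xf: "x \<le> f" using f(4) unfolding covers_def by auto
  have fy: "f \<le> y" using betw f by auto
  have wkA1: "w k \<in> A1" and wkB2: "w k \<in> B2" using Cincl k1 by auto
  have wR: "w k \<in> R" using k1 by auto
  have k1': "card {h\<in>B1. h \<le> f} \<le> card (Z \<inter> B1)"
  proof -
    have sub: "{h\<in>B1. h < f} \<subseteq> Z"
    proof
      fix h assume h: "h \<in> {h\<in>B1. h < f}"
      have hP: "h \<in> P" using h cP B1 by auto
      have "\<not> w k \<le> h"
      proof
        assume hz: "w k \<le> h"
        have fR: "f \<in> R" using f Qab by auto
        have hR: "h \<in> R" using Rconv'[OF wR fR hP] h hz by auto
        have fQ: "f \<in> Q" using f Qab by auto
        have hfl: "h \<le> f" using h by auto
        have "h \<in> Q \<or> h \<in> Cs" using F_down[OF hR fQ hfl] .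
        then show False
        proof
          assume "h \<in> Q" then have hy: "x \<le> h" using betw Qab by auto
          show False
          proof (cases "h = x")
            case True then show False using h xA1 A1B1 by auto
          next
            case False then show False using f(4) h hP hy unfolding covers_def by (auto simp: less_le)
          qed
        next
          assume "h \<in> Cs" then show False using h Cincl A1B1 by auto
        qed
      qed
      then show "h \<in> Z" using hP unfolding Z_def by auto
    qed
    have "{h\<in>B1. h \<le> f} = insert f {h\<in>B1. h < f}" using fB1 by (auto simp: less_le)
    then have "card {h\<in>B1. h \<le> f} = Suc (card {h\<in>B1. h < f})" using finB1 by simp
    also have "\<dots> = card (insert y {h\<in>B1. h < f})"
    proof -
      have "y \<notin> {h\<in>B1. h < f}" using fy by auto
      then show ?thesis using finB1 by simp
    qed
    also have "\<dots> \<le> card (Z \<inter> B1)"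
      using sub yA2 yB1 finB1 unfolding Z_def by (intro card_mono) auto
    finally show ?thesis .
  qed
  have k2': "card (Z \<inter> A1) < card {h\<in>A1. h \<le> x}"
  proof -
    define V where "V = {h\<in>A1. h < w k}"
    have sub: "Z \<inter> A1 \<subseteq> (a - {x, y}) \<union> V"
    proof
      fix h assume h: "h \<in> Z \<inter> A1"
      have hP: "h \<in> P" using h cP A1 by auto
      have tot: "h \<le> x \<or> x \<le> h" "h \<le> w k \<or> w k \<le> h"
        using cc_tot[OF cc1 A1(1)] h xA1 wkA1 by auto
      show "h \<in> (a - {x, y}) \<union> V"
      proof (cases "h \<in> A2 \<and> h \<le> y")
        case hA: True
        show ?thesis
        proof (cases "x \<le> h")
          case True
          have "h \<in> Q" using Qconv'[of x y h] xa ya Qab hP hA True by auto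
          then have "h \<in> a \<or> h \<in> b" using Qab by auto
          moreover have "h \<noteq> x" using hA xB2 A2B2 by auto
          moreover have "h \<noteq> y" using h yB1 A1B1 by auto
          moreover have "h \<notin> b - {x}" using h B1 A1B1 by auto
          ultimately show ?thesis by auto
        next
          case False
          then have yh: "h \<le> x" using tot by auto
          have "\<not> w k \<le> h"
          proof
            assume hz: "w k \<le> h"
            have xR: "x \<in> R" using xa Qab by auto
            have hR: "h \<in> R" using Rconv'[OF wR xR hP hz yh] .
            have "h \<in> Q \<or> h \<in> Cs" using F_down[OF hR _ yh] xa Qab by auto
            then show False
            proof
              assume "h \<in> Q" then show False using betw Qab False by auto
            next
              assume "h \<in> Cs" then show False using Cincl hA A2B2 by auto
            qed
          qed
          then have "h < w k" using tot by (auto simp: less_le)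
          then show ?thesis using h unfolding V_def by auto
        qed
      next
        case False
        then have "\<not> w k \<le> h" using h unfolding Z_def by auto
        then have "h < w k" using tot by (auto simp: less_le)
        then show ?thesis using h unfolding V_def by auto
      qed
    qed
    have fV: "finite V" using finA1 unfolding V_def by auto
    have "card (Z \<inter> A1) \<le> card ((a - {x, y}) \<union> V)" using sub fina fV by (intro card_mono) auto
    also have "\<dots> \<le> card (a - {x, y}) + card V" by (rule card_Un_le)
    finally have c1: "card (Z \<inter> A1) \<le> card a - 2 + card V" using card_mid by simp
    have wkx: "w k < x" using wx k1 by auto
    have ins: "insert x (Cs \<union> V) \<subseteq> {h\<in>A1. h \<le> x}"
      using Cincl xA1 wx wkx unfolding V_def by (auto intro: less_imp_le dest: order.strict_trans)
    have yn: "x \<notin> Cs \<union> V"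
    proof
      assume "x \<in> Cs \<union> V"
      then show False
      proof
        assume "x \<in> Cs" then obtain j where "j \<in> {1..k}" "x = w j" by auto
        then show False using wx[of j] by simp
      next
        assume "x \<in> V" then show False using wkx unfolding V_def by auto
      qed
    qed
    have dU: "Cs \<inter> V = {}" using wle unfolding V_def by (auto simp: less_le_not_le)
    have cD: "card Cs = k" using card_image[OF injw] by simp
    have "card (insert x (Cs \<union> V)) = Suc (k + card V)"
      using yn dU cD fV card_Un_disjoint[of Cs V] by simp
    moreover have "card (insert x (Cs \<union> V)) \<le> card {h\<in>A1. h \<le> x}"
      using ins finA1 by (intro card_mono) auto
    ultimately show ?thesis using c1 cl by linarith
  qed
  show False using sort_down[OF fin cc2 cc1 sc21 dn B2(1) xB2 fB2 xf B1(1) fB1 k1' A1(1) xA1 k2'] .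
qed

end


lemma main_ord:
  fixes P :: "'a::order set"
  assumes N: "in_N2 P C1 C2" and D: "diamond_ext P Q a b x y k w l z" and T: "typeI_ord C1 C2 a b x y"
  shows "((\<exists>c\<in>C1. (w ` {1..k} \<union> a) - {y} \<subseteq> c) \<and> (\<exists>c\<in>C2. (w ` {1..k} \<union> b) - {y} \<subseteq> c) \<and>
          (\<exists>c\<in>C2. (a \<union> z ` {1..l}) - {x} \<subseteq> c) \<and> (\<exists>c\<in>C1. (b \<union> z ` {1..l}) - {x} \<subseteq> c)) \<and>
         max (card (w ` {1..k})) (card (z ` {1..l})) < min (card a - 2) (card b - 2)"
proof -
  from T obtain A1 B2 B1 A2 where h: "A1 \<in> C1" "a - {y} \<subseteq> A1" "B2 \<in> C2" "b - {y} \<subseteq> B2"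
    "B1 \<in> C1" "b - {x} \<subseteq> B1" "A2 \<in> C2" "a - {x} \<subseteq> A2"
    unfolding typeI_ord_def by blast
  interpret d: dsetup P C1 C2 Q a b x y k w l z A1 A2 B1 B2
    using N D h by unfold_locales auto
  interpret s: dsetup P C2 C1 Q b a x y k w l z B2 B1 A2 A1 by (rule d.swap)
  have Ci: "\<forall>j\<in>{1..k}. w j \<in> A1 \<and> w j \<in> B2" using d.bot_incl[of k] by simp
  have Di: "\<forall>j\<in>{1..l}. z j \<in> A2 \<and> z j \<in> B1" using d.top_incl[of l] by simp
  have cC: "card (w ` {1..k}) = k" using card_image[OF d.injw] by simp
  have cD: "card (z ` {1..l}) = l" using card_image[OF d.injz] by simp
  have i1: "(w ` {1..k} \<union> a) - {y} \<subseteq> A1" using Ci h by auto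
  have i2: "(w ` {1..k} \<union> b) - {y} \<subseteq> B2" using Ci h by auto
  have i3: "(a \<union> z ` {1..l}) - {x} \<subseteq> A2" using Di h by auto
  have i4: "(b \<union> z ` {1..l}) - {x} \<subseteq> B1" using Di h by auto
  have bd: "max (card (w ` {1..k})) (card (z ` {1..l})) < min (card a - 2) (card b - 2)"
    using cC cD d.top_bound d.bot_bound s.top_bound s.bot_bound by simp
  show ?thesis using i1 i2 i3 i4 h bd by blast
qed

theorem lemma2p8:
  fixes P :: "'a::order set" and C1 C2 :: "'a set set" and Q a b :: "'a set"
    and x y :: 'a and k l :: nat and w z :: "nat \<Rightarrow> 'a"
  assumes "in_N2 P C1 C2"
    and "diamond_ext P Q a b x y k w l z"
    and "typeI C1 C2 a b x y"
  shows "(let Cs = w ` {1..k}; Ds = z ` {1..l};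
              concl = (\<lambda>C1 C2. (\<exists>c\<in>C1. (Cs \<union> a) - {y} \<subseteq> c) \<and> (\<exists>c\<in>C2. (Cs \<union> b) - {y} \<subseteq> c) \<and>
                               (\<exists>c\<in>C2. (a \<union> Ds) - {x} \<subseteq> c) \<and> (\<exists>c\<in>C1. (b \<union> Ds) - {x} \<subseteq> c))
          in (concl C1 C2 \<or> concl C2 C1) \<and>
             max (card Cs) (card Ds) < min (card a - 2) (card b - 2))"
proof -
  from assms(3) have "typeI_ord C1 C2 a b x y \<or> typeI_ord C2 C1 a b x y" unfolding typeI_def .
  then show ?thesis
  proof
    assume "typeI_ord C1 C2 a b x y"
    from main_ord[OF assms(1,2) this] show ?thesis unfolding Let_def by blast
  next
    assume "typeI_ord C2 C1 a b x y"
    from main_ord[OF in_N2_sym[OF assms(1)] assms(2) this] show ?thesis unfolding Let_def by blast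
  qed
qed

end
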